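(* Let $n,m\in\mathbb{N}$ and $\varrho:\mathbb{C}\to\mathbb{C}$. Then $\mathcal{SN}^\varrho_{n,m}\subseteq\mathcal{I}^\varrho_{n,m,n+m+1}$.
   Context: $\mathcal{SN}^\varrho_{n,m}$ denotes the set of shallow complex-valued neural networks, i.e. functions $V_2\circ\varrho^{\times N}\circ V_1:\mathbb{C}^n\to\mathbb{C}^m$ with arbitrary $N\in\mathbb{N}$, $\mathbb{C}$-affine maps $V_1:\mathbb{C}^n\to\mathbb{C}^N$, $V_2:\mathbb{C}^N\to\mathbb{C}^m$ (maps $z\mapsto Az+b$ with complex $A,b$), and $\varrho^{\times N}$ the componentwise application of $\varrho$. $\mathcal{I}^\varrho_{n,m,n+m+1}$ denotes the set of register models, i.e. functions $T_L\circ\tilde\varrho\circ T_{L-1}\circ\cdots\circ\tilde\varrho\circ T_1$ with arbitrary $L\ge2$, $\mathbb{C}$-affine $T_1:\mathbb{C}^n\to\mathbb{C}^{n+m+1}$, $T_L:\mathbb{C}^{n+m+1}\to\mathbb{C}^m$, $T_\ell:\mathbb{C}^{n+m+1}\to\mathbb{C}^{n+m+1}$ for $2\le\ell\le L-1$, where $\tilde\varrho:\mathbb{C}^{n+m+1}\to\mathbb{C}^{n+m+1}$ applies $\varrho$ to exactly one fixed coordinate (the $(n+1)$-th) and the identity to all other coordinates. *)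

theory Defs
  imports "HOL-Analysis.Analysis" "HOL-Library.FuncSet"
begin

text \<open>Vectors of C^k are represented as functions nat => complex vanishing at
indices >= k (coordinates are 0-indexed). A function C^n -> C^m is represented
by its restriction (FuncSet.restrict) to cvec n.\<close>

definition cvec :: "nat \<Rightarrow> (nat \<Rightarrow> complex) set" where
  "cvec k = {x. \<forall>i\<ge>k. x i = 0}"

definition caffine :: "nat \<Rightarrow> nat \<Rightarrow> (nat \<Rightarrow> nat \<Rightarrow> complex) \<Rightarrow> (nat \<Rightarrow> complex)
    \<Rightarrow> (nat \<Rightarrow> complex) \<Rightarrow> (nat \<Rightarrow> complex)" where
  "caffine a b A c = (\<lambda>x i. if i < b then (\<Sum>j<a. A i j * x j) + c i else 0)"

definition cwise :: "nat \<Rightarrow> (complex \<Rightarrow> complex) \<Rightarrow> (nat \<Rightarrow> complex) \<Rightarrow> (nat \<Rightarrow> complex)" where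
  "cwise N \<rho> = (\<lambda>x i. if i < N then \<rho> (x i) else 0)"

definition one_coord :: "nat \<Rightarrow> (complex \<Rightarrow> complex) \<Rightarrow> (nat \<Rightarrow> complex) \<Rightarrow> (nat \<Rightarrow> complex)" where
  "one_coord k \<rho> = (\<lambda>x i. if i = k then \<rho> (x i) else x i)"

definition SN :: "(complex \<Rightarrow> complex) \<Rightarrow> nat \<Rightarrow> nat \<Rightarrow> ((nat \<Rightarrow> complex) \<Rightarrow> (nat \<Rightarrow> complex)) set" where
  "SN \<rho> n m = {restrict (caffine N m A2 c2 \<circ> cwise N \<rho> \<circ> caffine n N A1 c1) (cvec n)
                 | N A1 c1 A2 c2. True}"

text \<open>Register models I^rho_{n,m,d}: T_L o rt o T_(L-1) o ... o rt o T_1, where the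
list ts contains the middle maps T_2,...,T_(L-1) (so L = length ts + 2 >= 2) and rt
applies rho to the (n+1)-th coordinate (0-based index n).\<close>
definition register :: "(complex \<Rightarrow> complex) \<Rightarrow> nat \<Rightarrow> nat \<Rightarrow> nat
    \<Rightarrow> ((nat \<Rightarrow> complex) \<Rightarrow> (nat \<Rightarrow> complex)) set" where
  "register \<rho> n m d = {restrict
      (caffine d m AL cL \<circ> one_coord n \<rho> \<circ>
        fold (\<lambda>(A, c) g. caffine d d A c \<circ> one_coord n \<rho> \<circ> g) ts (caffine n d A1 c1))
      (cvec n)
    | A1 c1 ts AL cL. True}"

end

theory Submission
  imports Defs
begin

lemma sum_if_less_aux:
  fixes f :: "nat \<Rightarrow> 'a::comm_monoid_add"
  assumes "n \<le> d"
  shows "(\<Sum>j<d. if j < n then f j else 0) = (\<Sum>j<n. f j)"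
proof -
  have "(\<Sum>j<d. if j < n then f j else 0) = (\<Sum>j\<in>{..<d} \<inter> {j. j < n}. f j)"
    by (simp add: sum.inter_restrict)
  also have "{..<d} \<inter> {j. j < n} = {..<n}" using assms by auto
  finally show ?thesis .
qed

theorem proposition3p4:
  fixes n m :: nat and \<rho> :: "complex \<Rightarrow> complex"
  shows "SN \<rho> n m \<subseteq> register \<rho> n m (n + m + 1)"
proof
  fix f assume "f \<in> SN \<rho> n m"
  then obtain N A1 c1 A2 c2 where f:
    "f = restrict (caffine N m A2 c2 \<circ> cwise N \<rho> \<circ> caffine n N A1 c1) (cvec n)"
    by (auto simp: SN_def)
  define d where "d = n + m + 1"
  define a where "a x = caffine n N A1 c1 x" for x
  have a_ge: "a x k = 0" if "N \<le> k" for x k using that by (simp add: a_def caffine_def)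
  define A1' :: "nat \<Rightarrow> nat \<Rightarrow> complex" where "A1' i j = (if i < n then (if j = i then 1 else 0)
      else if i = n then (if 0 < N then A1 0 j else 0) else 0)" for i j
  define c1' :: "nat \<Rightarrow> complex" where "c1' i = (if i = n \<and> 0 < N then c1 0 else 0)" for i
  define B :: "nat \<Rightarrow> nat \<Rightarrow> nat \<Rightarrow> complex" where "B k i j = (if i < n then (if j = i then 1 else 0)
      else if i = n then (if Suc k < N \<and> j < n then A1 (Suc k) j else 0)
      else (if j = i then 1 else 0) + (if j = n then A2 (i - n - 1) k else 0))" for k i j
  define e :: "nat \<Rightarrow> nat \<Rightarrow> complex" where "e k i = (if i = n \<and> Suc k < N then c1 (Suc k) else 0)" for k i
  define S where "S x k = (\<lambda>i. if i < n then x i else if i = n then a x k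
      else if i < d then (\<Sum>j<k. A2 (i - n - 1) j * \<rho> (a x j)) else 0)" for x k
  define AL :: "nat \<Rightarrow> nat \<Rightarrow> complex" where "AL i j = (if j = n + 1 + i then 1 else 0)" for i j
  define F :: "(nat \<Rightarrow> nat \<Rightarrow> complex) \<times> (nat \<Rightarrow> complex) \<Rightarrow> ((nat \<Rightarrow> complex) \<Rightarrow> (nat \<Rightarrow> complex)) \<Rightarrow> ((nat \<Rightarrow> complex) \<Rightarrow> (nat \<Rightarrow> complex))"
    where "F = (\<lambda>(A, c) g. caffine d d A c \<circ> one_coord n \<rho> \<circ> g)"
  define P where "P k = (B k, e k)" for k
  have init: "caffine n d A1' c1' x = S x 0" for x
  proof
    fix i
    show "caffine n d A1' c1' x i = S x 0 i"
    proof (cases "i < n")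
      case True
      have "(\<Sum>j<n. A1' i j * x j) = (\<Sum>j<n. if j = i then x j else 0)"
        by (rule sum.cong) (auto simp: A1'_def True)
      then show ?thesis using True by (simp add: caffine_def S_def d_def c1'_def)
    next
      case False
      then show ?thesis
        by (cases "i = n") (auto simp: caffine_def A1'_def c1'_def S_def a_def d_def)
    qed
  qed
  have step: "caffine d d (B k) (e k) (one_coord n \<rho> (S x k)) = S x (Suc k)" for x k
  proof
    fix i
    let ?y = "one_coord n \<rho> (S x k)"
    have yn: "?y n = \<rho> (a x k)" by (simp add: one_coord_def S_def)
    have yl: "?y j = x j" if "j < n" for j using that by (simp add: one_coord_def S_def)
    show "caffine d d (B k) (e k) ?y i = S x (Suc k) i"
    proof (cases "i < n")
      case True
      have "(\<Sum>j<d. B k i j * ?y j) = (\<Sum>j<d. if j = i then x j else 0)"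
        by (rule sum.cong) (auto simp: B_def True yl)
      then show ?thesis using True
        by (simp add: caffine_def e_def d_def S_def)
    next
      case False
      show ?thesis
      proof (cases "i = n")
        case True
        have "(\<Sum>j<d. B k i j * ?y j) = (\<Sum>j<d. if j < n then (if Suc k < N then A1 (Suc k) j * x j else 0) else 0)"
          by (rule sum.cong) (auto simp: B_def True yl)
        also have "\<dots> = (\<Sum>j<n. (if Suc k < N then A1 (Suc k) j * x j else 0))"
          by (rule sum_if_less_aux) (simp add: d_def)
        finally show ?thesis using True
          by (auto simp: caffine_def e_def S_def d_def a_def a_ge)
      next
        case ne: False
        show ?thesis
        proof (cases "i < d")
          case lt: True
          have "(\<Sum>j<d. B k i j * ?y j) = (\<Sum>j<d. (if j = i then ?y j else 0) + (if j = n then A2 (i - n - 1) k * ?y j else 0))"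
            by (rule sum.cong) (auto simp: B_def False ne)
          also have "\<dots> = ?y i + A2 (i - n - 1) k * ?y n"
            using lt ne by (simp add: sum.distrib d_def)
          finally show ?thesis using lt False ne
            by (simp add: caffine_def e_def S_def yn one_coord_def)
        next
          case False
          then show ?thesis using ne \<open>\<not> i < n\<close> by (simp add: caffine_def S_def)
        qed
      qed
    qed
  qed
  have iter: "fold F (map P [0..<k]) (caffine n d A1' c1') x = S x k" for x k
  proof (induction k)
    case 0
    then show ?case by (simp add: init)
  next
    case (Suc k)
    then show ?case by (simp add: F_def P_def step)
  qed
  have final: "caffine d m AL c2 (one_coord n \<rho> (S x N)) = (caffine N m A2 c2 \<circ> cwise N \<rho> \<circ> caffine n N A1 c1) x" for x
  proof
    fix i
    show "caffine d m AL c2 (one_coord n \<rho> (S x N)) i = (caffine N m A2 c2 \<circ> cwise N \<rho> \<circ> caffine n N A1 c1) x i"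
    proof (cases "i < m")
      case True
      have "(\<Sum>j<d. AL i j * one_coord n \<rho> (S x N) j) = (\<Sum>j<d. if j = n + 1 + i then one_coord n \<rho> (S x N) j else 0)"
        by (rule sum.cong) (auto simp: AL_def)
      also have "\<dots> = one_coord n \<rho> (S x N) (n + 1 + i)"
        using True by (simp add: d_def)
      also have "\<dots> = (\<Sum>j<N. A2 i j * \<rho> (a x j))"
        using True by (simp add: one_coord_def S_def d_def)
      also have "\<dots> = (\<Sum>j<N. A2 i j * cwise N \<rho> (caffine n N A1 c1 x) j)"
        by (rule sum.cong) (auto simp: cwise_def a_def)
      finally show ?thesis using True by (simp add: caffine_def)
    next
      case False
      then show ?thesis by (simp add: caffine_def)
    qed
  qed
  have "f = restrict (caffine d m AL c2 \<circ> one_coord n \<rho> \<circ>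
        fold (\<lambda>(A, c) g. caffine d d A c \<circ> one_coord n \<rho> \<circ> g) (map P [0..<N]) (caffine n d A1' c1'))
      (cvec n)"
    unfolding f F_def[symmetric]
    by (rule restrict_ext) (simp add: iter final)
  then show "f \<in> register \<rho> n m (n + m + 1)"
    unfolding register_def d_def by blast
qed

end
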